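(* Let $G$ be a locally compact, Hausdorff, étale groupoid and $\alpha$ an automorphism of $G$. Suppose that $G$ is ample and that $\mathcal{B}$ is a basis for the topology on $G^{(0)}$ consisting of compact open bisections such that for every $V \in \mathcal{B}$ there exists an integer $l \ge 1$ with $\alpha^{-l}(V)\subseteq V$. Then $G^\infty_\alpha$ is locally contracting.
   Context: Let $E$ be the directed graph with one vertex $v$ and countably infinitely many edges $e_1,e_2,\dots$. Let $E^*$ be its finite paths (including $v$), $E^\infty$ its infinite paths, $P = E^*\sqcup E^\infty$, $|\mu|$ the length. $H_\infty$ is the groupoid $\{(\alpha x, |\alpha|-|\beta|, \beta x) : x\in P, \alpha,\beta\in E^*\}\subseteq P\times\mathbb{Z}\times P$ with $(x,m,y)(y,n,z)=(x,m+n,z)$, $(x,m,y)^{-1}=(y,-m,x)$, unit space identified with $P$, topology generated by the sets $Z((\alpha,\beta)\setminus F)=\{(\alpha x,|\alpha|-|\beta|,\beta x): x\in P, x\text{ does not begin with an edge in }F\}$ ($F$ finite); $c(x,m,y)=m$. An automorphism is a structure-preserving homeomorphism. $G^\infty_\alpha$ is $H_\infty\times G$ with product topology, unit space $H_\infty^{(0)}\times G^{(0)}$, $r(h,g)=(r(h),r(g))$, $s(h,g)=(s(h),\alpha^{c(h)}(s(g)))$, product $(h_1,g_1)(h_2,g_2)=(h_1h_2,g_1\alpha^{-c(h_1)}(g_2))$, inverse $(h,g)^{-1}=(h^{-1},\alpha^{c(h)}(g^{-1}))$. A groupoid is ample if it has a basis of compact open bisections. An ample groupoid $L$ is locally contracting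 if for every nonempty open $W\subseteq L^{(0)}$ there is a compact open bisection $B$ with $r(B)\subsetneq s(B)\subseteq W$. *)

theory Defs
  imports "HOL-Analysis.Analysis"
begin

record 'a grpd =
  garr :: "'a set"
  grng :: "'a \<Rightarrow> 'a"
  gsrc :: "'a \<Rightarrow> 'a"
  gcomp :: "'a \<Rightarrow> 'a \<Rightarrow> 'a"
  ginv :: "'a \<Rightarrow> 'a"
  gtop :: "'a topology"

definition units :: "('a, 'b) grpd_scheme \<Rightarrow> 'a set" where
  "units G = {a \<in> garr G. grng G a = a}"

definition composable :: "('a, 'b) grpd_scheme \<Rightarrow> ('a \<times> 'a) set" where
  "composable G = {(a, b). a \<in> garr G \<and> b \<in> garr G \<and> gsrc G a = grng G b}"

definition groupoid :: "('a, 'b) grpd_scheme \<Rightarrow> bool" where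
  "groupoid G \<longleftrightarrow>
    (\<forall>a\<in>garr G. grng G a \<in> garr G \<and> gsrc G a \<in> garr G \<and> ginv G a \<in> garr G) \<and>
    (\<forall>a\<in>garr G. grng G (grng G a) = grng G a \<and> gsrc G (grng G a) = grng G a \<and>
                 grng G (gsrc G a) = gsrc G a \<and> gsrc G (gsrc G a) = gsrc G a) \<and>
    (\<forall>a\<in>garr G. grng G (ginv G a) = gsrc G a \<and> gsrc G (ginv G a) = grng G a) \<and>
    (\<forall>(a, b)\<in>composable G. gcomp G a b \<in> garr G \<and>
        grng G (gcomp G a b) = grng G a \<and> gsrc G (gcomp G a b) = gsrc G b) \<and>
    (\<forall>a\<in>garr G. \<forall>b\<in>garr G. \<forall>c\<in>garr G. gsrc G a = grng G b \<longrightarrow> gsrc G b = grng G c \<longrightarrow>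
        gcomp G (gcomp G a b) c = gcomp G a (gcomp G b c)) \<and>
    (\<forall>a\<in>garr G. gcomp G (grng G a) a = a \<and> gcomp G a (gsrc G a) = a) \<and>
    (\<forall>a\<in>garr G. gcomp G a (ginv G a) = grng G a \<and> gcomp G (ginv G a) a = gsrc G a)"

definition topological_groupoid :: "('a, 'b) grpd_scheme \<Rightarrow> bool" where
  "topological_groupoid G \<longleftrightarrow> groupoid G \<and> topspace (gtop G) = garr G \<and>
    continuous_map (gtop G) (gtop G) (grng G) \<and>
    continuous_map (gtop G) (gtop G) (gsrc G) \<and>
    continuous_map (gtop G) (gtop G) (ginv G) \<and>
    continuous_map (subtopology (prod_topology (gtop G) (gtop G)) (composable G)) (gtop G)
       (\<lambda>(a, b). gcomp G a b)"

definition etale :: "('a, 'b) grpd_scheme \<Rightarrow> bool" where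
  "etale G \<longleftrightarrow> (\<forall>a\<in>garr G. \<exists>U. openin (gtop G) U \<and> a \<in> U \<and>
      openin (subtopology (gtop G) (units G)) (grng G ` U) \<and>
      homeomorphic_map (subtopology (gtop G) U) (subtopology (gtop G) (grng G ` U)) (grng G))"

definition bisection :: "('a, 'b) grpd_scheme \<Rightarrow> 'a set \<Rightarrow> bool" where
  "bisection G B \<longleftrightarrow> B \<subseteq> garr G \<and> inj_on (grng G) B \<and> inj_on (gsrc G) B"

definition compact_open_bisection :: "('a, 'b) grpd_scheme \<Rightarrow> 'a set \<Rightarrow> bool" where
  "compact_open_bisection G B \<longleftrightarrow> bisection G B \<and> openin (gtop G) B \<and> compactin (gtop G) B"

definition ample :: "('a, 'b) grpd_scheme \<Rightarrow> bool" where
  "ample G \<longleftrightarrow> (\<exists>\<B>. (\<forall>B\<in>\<B>. compact_open_bisection G B) \<and>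
      (\<forall>U a. openin (gtop G) U \<and> a \<in> U \<longrightarrow> (\<exists>B\<in>\<B>. a \<in> B \<and> B \<subseteq> U)))"

definition automorphism :: "('a, 'b) grpd_scheme \<Rightarrow> ('a \<Rightarrow> 'a) \<Rightarrow> bool" where
  "automorphism G \<alpha> \<longleftrightarrow> bij_betw \<alpha> (garr G) (garr G) \<and>
     homeomorphic_map (gtop G) (gtop G) \<alpha> \<and>
     (\<forall>a\<in>garr G. \<alpha> (grng G a) = grng G (\<alpha> a) \<and> \<alpha> (gsrc G a) = gsrc G (\<alpha> a) \<and>
                  \<alpha> (ginv G a) = ginv G (\<alpha> a)) \<and>
     (\<forall>(a, b)\<in>composable G. \<alpha> (gcomp G a b) = gcomp G (\<alpha> a) (\<alpha> b))"

definition locally_contracting :: "('a, 'b) grpd_scheme \<Rightarrow> bool" where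
  "locally_contracting L \<longleftrightarrow>
    (\<forall>W. openin (subtopology (gtop L) (units L)) W \<and> W \<noteq> {} \<longrightarrow>
       (\<exists>B. compact_open_bisection L B \<and> grng L ` B \<subset> gsrc L ` B \<and> gsrc L ` B \<subseteq> W))"

section \<open>The graph with one vertex and countably many edges (edges indexed by nat)\<close>

text \<open>Finite paths: lists of edges (the empty list is the vertex v);
  infinite paths: sequences of edges.\<close>
type_synonym epath = "nat list + (nat \<Rightarrow> nat)"

fun pcat :: "nat list \<Rightarrow> epath \<Rightarrow> epath" where
  "pcat a (Inl l) = Inl (a @ l)"
| "pcat a (Inr f) = Inr (\<lambda>n. if n < length a then a ! n else f (n - length a))"

definition avoids :: "nat set \<Rightarrow> epath \<Rightarrow> bool" where
  "avoids F x = (case x of Inl [] \<Rightarrow> True | Inl (e # _) \<Rightarrow> e \<notin> F | Inr f \<Rightarrow> f 0 \<notin> F)"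

type_synonym harr = "epath \<times> int \<times> epath"

definition Zset :: "nat list \<Rightarrow> nat list \<Rightarrow> nat set \<Rightarrow> harr set" where
  "Zset a b F = {(pcat a x, int (length a) - int (length b), pcat b x) | x. avoids F x}"

definition Hinf :: "harr grpd" where
  "Hinf = \<lparr> garr = {(pcat a x, int (length a) - int (length b), pcat b x) | a b x. True},
            grng = (\<lambda>(x, m, y). (x, 0, x)),
            gsrc = (\<lambda>(x, m, y). (y, 0, y)),
            gcomp = (\<lambda>(x, m, y) (y', n, z). (x, m + n, z)),
            ginv = (\<lambda>(x, m, y). (y, - m, x)),
            gtop = topology_generated_by {Zset a b F | a b F. finite F} \<rparr>"

definition hc :: "harr \<Rightarrow> int" where
  "hc h = fst (snd h)"

definition autpow :: "('a, 'b) grpd_scheme \<Rightarrow> ('a \<Rightarrow> 'a) \<Rightarrow> int \<Rightarrow> 'a \<Rightarrow> 'a" where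
  "autpow G \<alpha> n = (if 0 \<le> n then \<alpha> ^^ nat n else (inv_into (garr G) \<alpha>) ^^ nat (- n))"

definition Ginf :: "('a, 'b) grpd_scheme \<Rightarrow> ('a \<Rightarrow> 'a) \<Rightarrow> (harr \<times> 'a) grpd" where
  "Ginf G \<alpha> = \<lparr> garr = garr Hinf \<times> garr G,
       grng = (\<lambda>(h, g). (grng Hinf h, grng G g)),
       gsrc = (\<lambda>(h, g). (gsrc Hinf h, autpow G \<alpha> (hc h) (gsrc G g))),
       gcomp = (\<lambda>(h1, g1) (h2, g2). (gcomp Hinf h1 h2, gcomp G g1 (autpow G \<alpha> (- hc h1) g2))),
       ginv = (\<lambda>(h, g). (ginv Hinf h, autpow G \<alpha> (hc h) (ginv G g))),
       gtop = prod_topology (gtop Hinf) (gtop G) \<rparr>"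

end

theory Submission
  imports Defs
begin


lemma pcat_Nil[simp]: "pcat [] x = x"
  by (cases x) auto

lemma pcat_append: "pcat (a@b) x = pcat a (pcat b x)"
proof (cases x)
  case (Inl l) then show ?thesis by simp
next
  case (Inr f) then show ?thesis by (auto simp: nth_append fun_eq_iff)
qed

lemma pcat_eq_len:
  assumes "pcat a x = pcat a' x'" "length a = length a'"
  shows "a = a' \<and> x = x'"
proof (cases x)
  case (Inl l)
  then obtain l' where "x' = Inl l'" using assms by (cases x') auto
  then show ?thesis using assms Inl by auto
next
  case (Inr f)
  then obtain f' where f': "x' = Inr f'" using assms by (cases x') auto
  have e: "\<And>n. (if n < length a then a ! n else f (n - length a)) = (if n < length a' then a' ! n else f' (n - length a'))"
    using assms Inr f' by (auto simp: fun_eq_iff)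
  have "a = a'"
  proof (rule nth_equalityI)
    show "length a = length a'" by fact
    fix i assume "i < length a" then show "a ! i = a' ! i" using e[of i] assms(2) by auto
  qed
  moreover have "f = f'"
  proof
    fix n show "f n = f' n" using e[of "n + length a"] assms(2) by auto
  qed
  ultimately show ?thesis using Inr f' by simp
qed

lemma pcat_inj: "pcat a x = pcat a y \<Longrightarrow> x = y"
  using pcat_eq_len by blast

lemma pcat_split:
  assumes "pcat a x = pcat c w" "length a \<le> length c"
  shows "\<exists>u. c = a @ u \<and> x = pcat u w"
proof -
  have "pcat a x = pcat (take (length a) c) (pcat (drop (length a) c) w)"
    using assms(1) pcat_append[of "take (length a) c" "drop (length a) c" w] by simp
  then have "a = take (length a) c \<and> x = pcat (drop (length a) c) w"
    using pcat_eq_len assms(2) by (metis length_take min.absorb2)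
  then show ?thesis by (metis append_take_drop_id)
qed

lemma pcat_cases:
  assumes "pcat a x = pcat c w"
  shows "(\<exists>u. c = a @ u \<and> x = pcat u w) \<or> (\<exists>u. a = c @ u \<and> w = pcat u x)"
  using pcat_split assms by (metis nat_le_linear)

lemma avoids_pcat: "u \<noteq> [] \<Longrightarrow> avoids F (pcat u y) \<longleftrightarrow> hd u \<notin> F"
  by (cases y; cases u) (auto simp: avoids_def)

lemma pcat_ne: "u \<noteq> [] \<Longrightarrow> pcat u y \<noteq> Inl []"
  by (cases y) auto



definition Zp :: "nat list \<Rightarrow> nat set \<Rightarrow> epath set" where
  "Zp a F = {pcat a x | x. avoids F x}"

definition PT :: "epath topology" where
  "PT = topology_generated_by {Zp a F | a F. finite F}"

lemma avoids_empty[simp]: "avoids {} x"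
  by (auto simp: avoids_def split: sum.splits list.splits)

lemma Zp_Nil_empty: "Zp [] {} = UNIV"
  by (auto simp: Zp_def)

lemma topspace_PT[simp]: "topspace PT = UNIV"
  unfolding PT_def topology_generated_by_topspace using Zp_Nil_empty by blast

lemma openin_Zp: "finite F \<Longrightarrow> openin PT (Zp a F)"
  unfolding PT_def by (rule topology_generated_by_Basis) blast

lemma psi_cont:
  "continuous_map PT (gtop Hinf) (\<lambda>x. (pcat a x, int (length a) - int (length b), pcat b x))"
  (is "continuous_map PT _ ?psi")
proof -
  have op: "openin PT (?psi -` (Zset c d F') \<inter> topspace PT)" if "finite F'" for c d F'
  proof (subst openin_subopen, intro ballI)
    fix x assume "x \<in> ?psi -` (Zset c d F') \<inter> topspace PT"
    then obtain w where w: "avoids F' w" "pcat a x = pcat c w" 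
       "int (length a) - int (length b) = int (length c) - int (length d)" "pcat b x = pcat d w"
      by (auto simp: Zset_def)
    from pcat_cases[OF w(2)] show "\<exists>T. openin PT T \<and> x \<in> T \<and> T \<subseteq> ?psi -` (Zset c d F') \<inter> topspace PT"
    proof
      assume "\<exists>u. c = a @ u \<and> x = pcat u w"
      then obtain u where u: "c = a @ u" "x = pcat u w" by blast
      then have "length b \<le> length d" using w(3) by simp
      then obtain u' where u': "d = b @ u'" "x = pcat u' w" using pcat_split[OF w(4)] by blast
      then have "u = u'" using pcat_eq_len[of u w u' w] u w(3) by simp
      show ?thesis
      proof (intro exI conjI)
        show "openin PT (Zp u F')" using openin_Zp that by blast
        show "x \<in> Zp u F'" using u w(1) by (auto simp: Zp_def)
        show "Zp u F' \<subseteq> ?psi -` (Zset c d F') \<inter> topspace PT"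
        proof
          fix y assume "y \<in> Zp u F'"
          then obtain z where z: "y = pcat u z" "avoids F' z" by (auto simp: Zp_def)
          have "?psi y = (pcat c z, int (length c) - int (length d), pcat d z)"
            using z u u' \<open>u = u'\<close> w(3) by (simp add: pcat_append)
          then have "?psi y \<in> Zset c d F'" using z(2) unfolding Zset_def by blast
          then show "y \<in> ?psi -` (Zset c d F') \<inter> topspace PT" by simp
        qed
      qed
    next
      assume "\<exists>u. a = c @ u \<and> w = pcat u x"
      then obtain u where u: "a = c @ u" "w = pcat u x" by blast
      then have "length d \<le> length b" using w(3) by simp
      then obtain u' where u': "b = d @ u'" "w = pcat u' x" using pcat_split[OF w(4)[symmetric]] by blast
      then have "u = u'" using pcat_eq_len[of u x u' x] u w(3) by simp
      show ?thesis
      proof (cases "u = []")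
        case True
        show ?thesis
        proof (intro exI conjI)
          show "openin PT (Zp [] F')" using openin_Zp that by blast
          show "x \<in> Zp [] F'" using u w(1) True by (auto simp: Zp_def)
          show "Zp [] F' \<subseteq> ?psi -` (Zset c d F') \<inter> topspace PT"
          proof
            fix y assume "y \<in> Zp [] F'"
            then obtain z where z: "y = z" "avoids F' z" by (auto simp: Zp_def)
            have "?psi y = (pcat c z, int (length c) - int (length d), pcat d z)"
              using z u u' \<open>u = u'\<close> True by simp
            then have "?psi y \<in> Zset c d F'" using z(2) unfolding Zset_def by blast
            then show "y \<in> ?psi -` (Zset c d F') \<inter> topspace PT" by simp
          qed
        qed
      next
        case False
        have "hd u \<notin> F'" using w(1) u(2) avoids_pcat[OF False] by simp
        show ?thesis
        proof (intro exI conjI)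
          show "openin PT UNIV" using openin_topspace[of PT] by simp
          show "x \<in> UNIV" by simp
          have av: "avoids F' (pcat u y)" for y using avoids_pcat[OF False] \<open>hd u \<notin> F'\<close> by simp
          show "UNIV \<subseteq> ?psi -` (Zset c d F') \<inter> topspace PT"
          proof
            fix y :: epath
            have "?psi y = (pcat c (pcat u y), int (length c) - int (length d), pcat d (pcat u y))"
              using u u' \<open>u = u'\<close> by (simp add: pcat_append)
            then have "?psi y \<in> Zset c d F'" using av[of y] unfolding Zset_def by blast
            then show "y \<in> ?psi -` (Zset c d F') \<inter> topspace PT" by simp
          qed
        qed
      qed
    qed
  qed
  have sub: "?psi ` topspace PT \<subseteq> \<Union>{Zset a b F | a b F. finite F}"
  proof
    fix y assume "y \<in> ?psi ` topspace PT"
    then obtain x where "y = ?psi x" by auto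
    then have "y \<in> Zset a b {}" unfolding Zset_def by auto
    then show "y \<in> \<Union>{Zset a b F | a b F. finite F}" by blast
  qed
  have eq: "gtop Hinf = topology_generated_by {Zset a b F | a b F. finite F}"
    by (simp add: Hinf_def)
  have "continuous_map PT (topology_generated_by {Zset a b F | a b F. finite F}) ?psi"
  proof (rule continuous_on_generated_topo)
    fix U assume "U \<in> {Zset a b F | a b F. finite F}"
    then obtain c d F' where "U = Zset c d F'" "finite F'" by blast
    then show "openin PT (?psi -` U \<inter> topspace PT)" using op by blast
  next
    show "?psi ` topspace PT \<subseteq> \<Union>{Zset a b F | a b F. finite F}" by (rule sub)
  qed
  then show ?thesis unfolding eq .
qed



lemma Inl_in_Zp: "Inl L \<in> Zp a F \<longleftrightarrow>
   length a \<le> length L \<and> (\<forall>i<length a. L ! i = a ! i) \<and> (length a < length L \<longrightarrow> L ! length a \<notin> F)"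
proof
  assume "Inl L \<in> Zp a F"
  then obtain x where x: "Inl L = pcat a x" "avoids F x" unfolding Zp_def by blast
  then obtain l where l: "x = Inl l" by (cases x) auto
  then have L: "L = a @ l" using x by simp
  show "length a \<le> length L \<and> (\<forall>i<length a. L ! i = a ! i) \<and> (length a < length L \<longrightarrow> L ! length a \<notin> F)"
  proof (intro conjI allI impI)
    show "length a \<le> length L" using L by simp
    fix i assume "i < length a" then show "L ! i = a ! i" using L by (simp add: nth_append)
  next
    assume "length a < length L"
    then obtain e t where lt: "l = e # t" using L by (cases l) auto
    then have "L ! length a = e" using L by (simp add: nth_append)
    moreover have "e \<notin> F" using x(2) l lt by (simp add: avoids_def)
    ultimately show "L ! length a \<notin> F" by simp
  qed
next
  assume A: "length a \<le> length L \<and> (\<forall>i<length a. L ! i = a ! i) \<and> (length a < length L \<longrightarrow> L ! length a \<notin> F)"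
  have "take (length a) L = a" using A by (intro nth_equalityI) auto
  then have L: "L = a @ drop (length a) L" by (metis append_take_drop_id)
  have "avoids F (Inl (drop (length a) L))"
  proof (cases "drop (length a) L")
    case Nil then show ?thesis by (simp add: avoids_def)
  next
    case (Cons e t)
    then have "length a < length L" by (metis drop_all list.distinct(1) not_le)
    moreover have "L ! length a = e" using Cons \<open>length a < length L\<close>
      by (metis Cons_nth_drop_Suc list.inject)
    ultimately have "e \<notin> F" using A by blast
    then show ?thesis using Cons by (simp add: avoids_def)
  qed
  then show "Inl L \<in> Zp a F" unfolding Zp_def using L by (metis (mono_tags, lifting) mem_Collect_eq pcat.simps(1))
qed

lemma Inr_in_Zp: "Inr f \<in> Zp a F \<longleftrightarrow> (\<forall>i<length a. f i = a ! i) \<and> f (length a) \<notin> F"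
proof
  assume "Inr f \<in> Zp a F"
  then obtain x where x: "Inr f = pcat a x" "avoids F x" by (auto simp: Zp_def)
  then obtain g where g: "x = Inr g" by (cases x) auto
  then show "(\<forall>i<length a. f i = a ! i) \<and> f (length a) \<notin> F"
    using x by (auto simp: avoids_def)
next
  assume A: "(\<forall>i<length a. f i = a ! i) \<and> f (length a) \<notin> F"
  have "Inr f = pcat a (Inr (\<lambda>i. f (i + length a)))"
    using A by (auto simp: fun_eq_iff)
  moreover have "avoids F (Inr (\<lambda>i. f (i + length a)))" using A by (simp add: avoids_def)
  ultimately show "Inr f \<in> Zp a F" unfolding Zp_def by blast
qed

definition Phi :: "(nat \<Rightarrow> enat) \<Rightarrow> epath" where
  "Phi s = (if \<exists>i. s i = \<infinity> then Inl (map (\<lambda>i. the_enat (s i)) [0..<(LEAST i. s i = \<infinity>)])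
            else Inr (\<lambda>i. the_enat (s i)))"

lemma Phi_in_Zp: "Phi s \<in> Zp a F \<longleftrightarrow> (\<forall>i<length a. s i = enat (a ! i)) \<and> s (length a) \<notin> enat ` F"
proof (cases "\<exists>i. s i = \<infinity>")
  case True
  define n where "n = (LEAST i. s i = \<infinity>)"
  have sn: "s n = \<infinity>" using True unfolding n_def by (rule LeastI_ex)
  have lt: "i < n \<Longrightarrow> s i \<noteq> \<infinity>" for i unfolding n_def by (rule not_less_Least)
  have P: "Phi s = Inl (map (\<lambda>i. the_enat (s i)) [0..<n])" unfolding Phi_def n_def using True by (simp only: if_True)
  show ?thesis
  proof
    assume "Phi s \<in> Zp a F"
    have A0: "length a \<le> n \<and> (\<forall>i<length a. map (\<lambda>i. the_enat (s i)) [0..<n] ! i = a ! i) \<and>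
       (length a < n \<longrightarrow> map (\<lambda>i. the_enat (s i)) [0..<n] ! length a \<notin> F)"
    proof -
      have "Inl (map (\<lambda>i. the_enat (s i)) [0..<n]) \<in> Zp a F" using P \<open>Phi s \<in> Zp a F\<close> by simp
      then show ?thesis unfolding Inl_in_Zp length_map length_upt diff_zero .
    qed
    have A1: "length a \<le> n" using A0 by blast
    have A2: "length a < n \<longrightarrow> the_enat (s (length a)) \<notin> F"
    proof
      assume h: "length a < n"
      then have eq: "map (\<lambda>i. the_enat (s i)) [0..<n] ! length a = the_enat (s (length a))" by simp
      have "map (\<lambda>i. the_enat (s i)) [0..<n] ! length a \<notin> F" using A0 h by blast
      then show "the_enat (s (length a)) \<notin> F" using eq by simp
    qed
    note A = A1 A2
    have "\<forall>i<length a. the_enat (s i) = a ! i"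
    proof (intro allI impI)
      fix i assume i: "i < length a"
      then have "i < n" using A(1) by simp
      then have "map (\<lambda>i. the_enat (s i)) [0..<n] ! i = the_enat (s i)" by simp
      then show "the_enat (s i) = a ! i" using A0 i by metis
    qed
    note A = A(1) this A(2)
    have "\<forall>i<length a. s i = enat (a ! i)"
    proof (intro allI impI)
      fix i assume i: "i < length a"
      then have "s i \<noteq> \<infinity>" using lt A(1) by simp
      then show "s i = enat (a ! i)" using A(2) i by (cases "s i") auto
    qed
    moreover have "s (length a) \<notin> enat ` F"
    proof (cases "length a < n")
      case True then show ?thesis using A lt[of "length a"] by (cases "s (length a)") auto
    next
      case False then have "length a = n" using A by simp
      then show ?thesis using sn by auto
    qed
    ultimately show "(\<forall>i<length a. s i = enat (a ! i)) \<and> s (length a) \<notin> enat ` F" by blast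
  next
    assume A: "(\<forall>i<length a. s i = enat (a ! i)) \<and> s (length a) \<notin> enat ` F"
    have "length a \<le> n"
    proof (rule ccontr)
      assume "\<not> length a \<le> n" then have "s n = enat (a ! n)" using A by simp
      then show False using sn by simp
    qed
    have "length a < n \<longrightarrow> the_enat (s (length a)) \<notin> F"
      using A lt[of "length a"] by (cases "s (length a)") auto
    moreover have "Inl (map (\<lambda>i. the_enat (s i)) [0..<n]) \<in> Zp a F"
      unfolding Inl_in_Zp length_map length_upt diff_zero
    proof (intro conjI allI impI)
      show "length a \<le> n" by fact
      fix i assume i: "i < length a"
      then have "i < n" using \<open>length a \<le> n\<close> by simp
      then have "map (\<lambda>i. the_enat (s i)) [0..<n] ! i = the_enat (s i)" by simp
      also have "\<dots> = a ! i" using A i by simp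
      finally show "map (\<lambda>i. the_enat (s i)) [0..<n] ! i = a ! i" .
    next
      assume "length a < n"
      then have "map (\<lambda>i. the_enat (s i)) [0..<n] ! length a = the_enat (s (length a))" by simp
      then show "map (\<lambda>i. the_enat (s i)) [0..<n] ! length a \<notin> F"
        using \<open>length a < n \<longrightarrow> the_enat (s (length a)) \<notin> F\<close> \<open>length a < n\<close> by simp
    qed
    then show "Phi s \<in> Zp a F" using P by simp
  qed
next
  case False
  then have P: "Phi s = Inr (\<lambda>i. the_enat (s i))" by (simp add: Phi_def)
  have fin: "s i = enat (the_enat (s i))" for i
  proof -
    have "s i \<noteq> \<infinity>" using False by auto
    then show ?thesis by (cases "s i") auto
  qed
  show ?thesis unfolding P Inr_in_Zp
  proof
    assume A: "(\<forall>i<length a. the_enat (s i) = a ! i) \<and> the_enat (s (length a)) \<notin> F"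
    show "(\<forall>i<length a. s i = enat (a ! i)) \<and> s (length a) \<notin> enat ` F"
    proof
      show "\<forall>i<length a. s i = enat (a ! i)" using A fin by metis
      show "s (length a) \<notin> enat ` F"
      proof
        assume "s (length a) \<in> enat ` F"
        then obtain k where "k \<in> F" "s (length a) = enat k" by blast
        then show False using A by simp
      qed
    qed
  next
    assume A: "(\<forall>i<length a. s i = enat (a ! i)) \<and> s (length a) \<notin> enat ` F"
    show "(\<forall>i<length a. the_enat (s i) = a ! i) \<and> the_enat (s (length a)) \<notin> F"
    proof
      show "\<forall>i<length a. the_enat (s i) = a ! i" using A by simp
      show "the_enat (s (length a)) \<notin> F" using A fin[of "length a"] by (metis image_eqI)
    qed
  qed
qed

abbreviation PS :: "(nat \<Rightarrow> enat) topology" where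
  "PS \<equiv> product_topology (\<lambda>_. euclidean) UNIV"

lemma topspace_PS[simp]: "topspace PS = UNIV"
  by (auto simp: PiE_def extensional_def)

lemma open_enat_single: "open {enat k}"
proof (cases k)
  case 0
  have "{enat k} = {..<enat 1}"
  proof
    show "{enat k} \<subseteq> {..<enat 1}" using 0 by simp
    show "{..<enat 1} \<subseteq> {enat k}"
    proof
      fix x assume "x \<in> {..<enat 1}" then show "x \<in> {enat k}" using 0 by (cases x) auto
    qed
  qed
  then show ?thesis by (metis open_lessThan)
next
  case (Suc m)
  have "{enat k} = {enat m<..<enat (Suc k)}"
  proof
    show "{enat k} \<subseteq> {enat m<..<enat (Suc k)}" using Suc by simp
    show "{enat m<..<enat (Suc k)} \<subseteq> {enat k}"
    proof
      fix x assume "x \<in> {enat m<..<enat (Suc k)}" then show "x \<in> {enat k}" using Suc by (cases x) auto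
    qed
  qed
  then show ?thesis by (metis open_greaterThanLessThan)
qed

lemma openin_PS_coord: "open Ov \<Longrightarrow> openin PS {s. s i \<in> Ov}"
  using openin_continuous_map_preimage[OF continuous_map_product_projection[of i UNIV "\<lambda>_. euclidean"], of Ov]
  by simp

lemma Phi_cont: "continuous_map PS PT Phi"
  unfolding PT_def
proof (rule continuous_on_generated_topo)
  fix U assume "U \<in> {Zp a F | a F. finite F}"
  then obtain a F where U: "U = Zp a F" "finite F" by blast
  define V where "V i = (if i < length a then {s. s i \<in> {enat (a ! i)}} else {s :: nat \<Rightarrow> enat. s i \<in> - (enat ` F)})" for i
  have iff: "(\<forall>i\<in>{..length a}. s \<in> V i) \<longleftrightarrow> (\<forall>i<length a. s i = enat (a ! i)) \<and> s (length a) \<notin> enat ` F" for s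
  proof
    assume "\<forall>i\<in>{..length a}. s \<in> V i"
    then show "(\<forall>i<length a. s i = enat (a ! i)) \<and> s (length a) \<notin> enat ` F"
      unfolding V_def by (metis (no_types, lifting) Compl_iff atMost_iff less_imp_le_nat mem_Collect_eq order_refl singletonD less_irrefl)
  next
    assume A: "(\<forall>i<length a. s i = enat (a ! i)) \<and> s (length a) \<notin> enat ` F"
    show "\<forall>i\<in>{..length a}. s \<in> V i"
    proof
      fix i assume "i \<in> {..length a}"
      then have "i < length a \<or> i = length a" by auto
      then show "s \<in> V i" using A unfolding V_def by auto
    qed
  qed
  have "Phi -` U \<inter> topspace PS = (\<Inter>i\<in>{..length a}. V i) \<inter> topspace PS"
  proof (intro set_eqI)
    fix s show "s \<in> Phi -` U \<inter> topspace PS \<longleftrightarrow> s \<in> (\<Inter>i\<in>{..length a}. V i) \<inter> topspace PS"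
      using Phi_in_Zp[of s a F] iff[of s] U(1) by simp
  qed
  moreover have "openin PS (V i)" for i
  proof (cases "i < length a")
    case True then show ?thesis unfolding V_def using openin_PS_coord[OF open_enat_single[of "a!i"], of i] by simp
  next
    case False
    have "open (- (enat ` F))" using U(2) by (simp add: finite_imp_closed open_Compl)
    then show ?thesis unfolding V_def using openin_PS_coord[of "- (enat ` F)" i] False by simp
  qed
  ultimately show "openin PS (Phi -` U \<inter> topspace PS)" by (metis finite_atMost openin_INT)
next
  show "Phi ` topspace PS \<subseteq> \<Union> {Zp a F | a F. finite F}" using Zp_Nil_empty by blast
qed

lemma Zp_Nil: "Zp [] F = {x. avoids F x}"
  by (auto simp: Zp_def)

lemma compact_Zp_Nil: "finite F \<Longrightarrow> compactin PT (Zp [] F)"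
proof -
  assume fin: "finite F"
  define S where "S (i::nat) = (if i = 0 then - (enat ` F) else (UNIV :: enat set))" for i
  have "closed (- (enat ` F))"
  proof -
    have "enat ` F = (\<Union>k\<in>F. {enat k})" by auto
    then have "open (enat ` F)" using open_enat_single by (metis open_UN)
    then show ?thesis by (simp add: closed_Compl)
  qed
  then have cS: "compactin euclidean (S i)" for i
  proof (cases "i = 0")
    case True
    have "compact (UNIV \<inter> - (enat ` F))"
      by (rule compact_Int_closed[OF compact_UNIV \<open>closed (- (enat ` F))\<close>])
    then show ?thesis unfolding S_def using True by simp
  next
    case False then show ?thesis unfolding S_def using compact_UNIV by simp
  qed
  have "compactin PS (PiE UNIV S)" using cS by (simp add: compactin_PiE)
  then have "compactin PT (Phi ` PiE UNIV S)" using Phi_cont image_compactin by blast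
  moreover have "Phi ` PiE UNIV S = Zp [] F"
  proof
    show "Phi ` PiE UNIV S \<subseteq> Zp [] F"
    proof
      fix y assume "y \<in> Phi ` PiE UNIV S"
      then obtain s where s: "s \<in> PiE UNIV S" "y = Phi s" by blast
      then have "s 0 \<in> S 0" by (simp add: PiE_mem)
      then have "s 0 \<notin> enat ` F" by (simp add: S_def)
      then show "y \<in> Zp [] F" using s(2) Phi_in_Zp[of s "[]" F] by simp
    qed
    show "Zp [] F \<subseteq> Phi ` PiE UNIV S"
    proof
      fix x assume x: "x \<in> Zp [] F"
      show "x \<in> Phi ` PiE UNIV S"
      proof (cases x)
        case (Inl l)
        define s where "s i = (if i < length l then enat (l ! i) else \<infinity>)" for i
        have ex: "\<exists>i. s i = \<infinity>" unfolding s_def by auto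
        have le: "(LEAST i. s i = \<infinity>) = length l"
          by (rule Least_equality) (auto simp: s_def not_less[symmetric])
        have "map (\<lambda>i. the_enat (s i)) [0..<length l] = l"
          by (rule nth_equalityI) (simp_all add: s_def)
        then have "Phi s = x" unfolding Phi_def using ex le Inl by simp
        moreover have "s \<in> PiE UNIV S"
        proof -
          have "avoids F (Inl l)" using x Inl by (simp add: Zp_Nil)
          then have "s 0 \<notin> enat ` F" by (cases l) (auto simp: s_def avoids_def)
          then show ?thesis by (auto simp: S_def)
        qed
        ultimately show ?thesis by blast
      next
        case (Inr f)
        define s where "s i = enat (f i)" for i
        have "Phi s = x" unfolding Phi_def using Inr by (auto simp: s_def)
        moreover have "s \<in> PiE UNIV S"
        proof -
          have "avoids F (Inr f)" using x Inr by (simp add: Zp_Nil)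
          then have "s 0 \<notin> enat ` F" by (auto simp: s_def avoids_def)
          then show ?thesis by (auto simp: S_def)
        qed
        ultimately show ?thesis by blast
      qed
    qed
  qed
  ultimately show ?thesis by simp
qed

lemma compact_Zset: "finite F \<Longrightarrow> compactin (gtop Hinf) (Zset a b F)"
proof -
  assume "finite F"
  have "Zset a b F = (\<lambda>x. (pcat a x, int (length a) - int (length b), pcat b x)) ` Zp [] F"
    by (auto simp: Zset_def Zp_Nil)
  then show ?thesis using image_compactin[OF compact_Zp_Nil[OF \<open>finite F\<close>] psi_cont] by simp
qed



lemma avoids_mono: "avoids F z \<Longrightarrow> G \<subseteq> F \<Longrightarrow> avoids G z"
  by (auto simp: avoids_def split: sum.splits list.splits)

lemma avoids_Un: "avoids F z \<Longrightarrow> avoids G z \<Longrightarrow> avoids (F \<union> G) z"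
  by (auto simp: avoids_def split: sum.splits list.splits)

lemma Zp_sub:
  assumes "x \<in> Zp a F1" "x \<in> Zp (a @ u) F2" "u \<noteq> []"
  shows "Zp (a @ u) F2 \<subseteq> Zp a F1"
proof -
  obtain y1 where y1: "x = pcat a y1" "avoids F1 y1" using assms(1) unfolding Zp_def by blast
  obtain y2 where y2: "x = pcat (a @ u) y2" using assms(2) unfolding Zp_def by blast
  have "y1 = pcat u y2" using y1 y2 pcat_inj by (metis pcat_append)
  then have h: "hd u \<notin> F1" using y1(2) avoids_pcat[OF assms(3)] by simp
  show ?thesis
  proof
    fix z assume "z \<in> Zp (a @ u) F2"
    then obtain w where "z = pcat (a @ u) w" unfolding Zp_def by blast
    then have "z = pcat a (pcat u w)" by (simp add: pcat_append)
    moreover have "avoids F1 (pcat u w)" using h avoids_pcat[OF assms(3)] by simp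
    ultimately show "z \<in> Zp a F1" unfolding Zp_def by blast
  qed
qed

lemma Zp_same:
  assumes "x \<in> Zp a F1" "x \<in> Zp a F2"
  shows "x \<in> Zp a (F1 \<union> F2) \<and> Zp a (F1 \<union> F2) \<subseteq> Zp a F1 \<inter> Zp a F2"
proof
  obtain y1 where y1: "x = pcat a y1" "avoids F1 y1" using assms(1) unfolding Zp_def by blast
  obtain y2 where y2: "x = pcat a y2" "avoids F2 y2" using assms(2) unfolding Zp_def by blast
  have "y1 = y2" using y1 y2 pcat_inj by metis
  then show "x \<in> Zp a (F1 \<union> F2)" using y1 y2 avoids_Un unfolding Zp_def by blast
  show "Zp a (F1 \<union> F2) \<subseteq> Zp a F1 \<inter> Zp a F2"
    unfolding Zp_def using avoids_mono by blast
qed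

lemma Zp_inter:
  assumes "x \<in> Zp a1 F1" "x \<in> Zp a2 F2" "finite F1" "finite F2"
  shows "\<exists>a F. finite F \<and> x \<in> Zp a F \<and> Zp a F \<subseteq> Zp a1 F1 \<inter> Zp a2 F2"
proof -
  obtain y1 where y1: "x = pcat a1 y1" using assms(1) unfolding Zp_def by blast
  obtain y2 where y2: "x = pcat a2 y2" using assms(2) unfolding Zp_def by blast
  have disj: "(\<exists>u. a2 = a1 @ u \<and> y1 = pcat u y2) \<or> (\<exists>u. a1 = a2 @ u \<and> y2 = pcat u y1)"
    using pcat_cases[of a1 y1 a2 y2] y1 y2 by simp
  from disj show ?thesis
  proof (elim disjE exE conjE)
    fix u assume u: "a2 = a1 @ u"
    show ?thesis
    proof (cases "u = []")
      case True
      have "x \<in> Zp a1 F2" using assms(2) u True by simp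
      then have "x \<in> Zp a1 (F1 \<union> F2) \<and> Zp a1 (F1 \<union> F2) \<subseteq> Zp a1 F1 \<inter> Zp a1 F2"
        using Zp_same assms(1) by blast
      moreover have "finite (F1 \<union> F2)" using assms(3,4) by simp
      ultimately show ?thesis using u True by (metis append_Nil2)
    next
      case False
      then have "Zp a2 F2 \<subseteq> Zp a1 F1" using Zp_sub[of x a1 F1 u F2] assms u by simp
      then show ?thesis using assms by blast
    qed
  next
    fix u assume u: "a1 = a2 @ u"
    show ?thesis
    proof (cases "u = []")
      case True
      have "x \<in> Zp a1 F2" using assms(2) u True by simp
      then have "x \<in> Zp a1 (F1 \<union> F2) \<and> Zp a1 (F1 \<union> F2) \<subseteq> Zp a1 F1 \<inter> Zp a1 F2"
        using Zp_same assms(1) by blast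
      moreover have "finite (F1 \<union> F2)" using assms(3,4) by simp
      ultimately show ?thesis using u True by (metis append_Nil2)
    next
      case False
      then have "Zp a1 F1 \<subseteq> Zp a2 F2" using Zp_sub[of x a2 F2 u F1] assms u by simp
      then show ?thesis using assms by blast
    qed
  qed
qed

lemma PT_basis:
  assumes "openin PT O'" "x \<in> O'"
  shows "\<exists>a F. finite F \<and> x \<in> Zp a F \<and> Zp a F \<subseteq> O'"
proof -
  have "generate_topology_on {Zp a F | a F. finite F} O'"
    using assms(1) unfolding PT_def by (rule openin_topology_generated_by)
  then show ?thesis using assms(2)
  proof (induction arbitrary: x)
    case Empty then show ?case by simp
  next
    case (Int a b)
    have "x \<in> a" "x \<in> b" using Int.prems by auto
    obtain a1 F1 where 1: "finite F1" "x \<in> Zp a1 F1" "Zp a1 F1 \<subseteq> a" using Int.IH(1)[OF \<open>x \<in> a\<close>] by blast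
    obtain a2 F2 where 2: "finite F2" "x \<in> Zp a2 F2" "Zp a2 F2 \<subseteq> b" using Int.IH(2)[OF \<open>x \<in> b\<close>] by blast
    obtain a' F' where "finite F'" "x \<in> Zp a' F'" "Zp a' F' \<subseteq> Zp a1 F1 \<inter> Zp a2 F2"
      using Zp_inter[OF 1(2) 2(2) 1(1) 2(1)] by blast
    then show ?case using 1(3) 2(3) by blast
  next
    case (UN K)
    then obtain k where k: "k \<in> K" "x \<in> k" by blast
    obtain a F where "finite F" "x \<in> Zp a F" "Zp a F \<subseteq> k" using UN.IH[OF k] by blast
    then show ?case using k(1) by blast
  next
    case (Basis s)
    then show ?case by blast
  qed
qed



lemma Ginf_simps:
  "garr (Ginf G \<alpha>) = garr Hinf \<times> garr G"
  "grng (Ginf G \<alpha>) (h, g) = (grng Hinf h, grng G g)"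
  "gsrc (Ginf G \<alpha>) (h, g) = (gsrc Hinf h, autpow G \<alpha> (hc h) (gsrc G g))"
  "gtop (Ginf G \<alpha>) = prod_topology (gtop Hinf) (gtop G)"
  by (simp_all add: Ginf_def)

lemma Hinf_simps:
  "grng Hinf (x, m, y) = (x, 0, x)"
  "gsrc Hinf (x, m, y) = (y, 0, y)"
  "hc (x, m, y) = m"
  by (simp_all add: Hinf_def hc_def)

lemma Zset_sub_garr: "Zset a b F \<subseteq> garr Hinf"
  by (auto simp: Zset_def Hinf_def)

lemma openin_Zset: "finite F \<Longrightarrow> openin (gtop Hinf) (Zset a b F)"
  unfolding Hinf_def by simp (rule topology_generated_by_Basis, blast)

lemma homeo_funpow:
  assumes "homeomorphic_map X X f" shows "homeomorphic_map X X (f ^^ n)"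
proof (induction n)
  case 0 then show ?case by (simp add: id_def[symmetric])
next
  case (Suc n)
  show ?case unfolding funpow.simps(2) by (rule homeomorphic_map_compose[OF Suc assms])
qed



theorem lemma5p4:
  fixes G :: "'a grpd" and \<alpha> :: "'a \<Rightarrow> 'a" and \<B> :: "'a set set"
  assumes "topological_groupoid G"
    and "locally_compact_space (gtop G)"
    and "Hausdorff_space (gtop G)"
    and "etale G"
    and "automorphism G \<alpha>"
    and "ample G"
    and "\<forall>V\<in>\<B>. V \<subseteq> units G \<and> compact_open_bisection G V"
    and "\<forall>U x. openin (subtopology (gtop G) (units G)) U \<and> x \<in> U \<longrightarrow> (\<exists>V\<in>\<B>. x \<in> V \<and> V \<subseteq> U)"
    and "\<forall>V\<in>\<B>. \<exists>l::nat. l \<ge> 1 \<and> {x \<in> garr G. (\<alpha> ^^ l) x \<in> V} \<subseteq> V"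
  shows "locally_contracting (Ginf G \<alpha>)"
  unfolding locally_contracting_def
proof (intro allI impI)
  let ?L = "Ginf G \<alpha>"
  have grp: "groupoid G" and topG: "topspace (gtop G) = garr G"
    using assms(1) unfolding topological_groupoid_def by auto
  have unitG: "grng G g = g" "gsrc G g = g" if "g \<in> units G" for g
  proof -
    show "grng G g = g" using that by (simp add: units_def)
    have "g \<in> garr G" using that by (simp add: units_def)
    then have "gsrc G (grng G g) = grng G g" using grp unfolding groupoid_def by blast
    then show "gsrc G g = g" using \<open>grng G g = g\<close> by simp
  qed
  fix W assume HW: "openin (subtopology (gtop ?L) (units ?L)) W \<and> W \<noteq> {}"
  then obtain U where U: "openin (gtop ?L) U" "W = U \<inter> units ?L"
    unfolding openin_subtopology by blast
  obtain p where p: "p \<in> W" using HW by blast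
  obtain h0 g0 where p0: "p = (h0, g0)" by (cases p)
  obtain x0 m0 y0 where h0: "h0 = (x0, m0, y0)" by (cases h0) auto
  have pu: "p \<in> units ?L" using p U by simp
  then have "grng Hinf h0 = h0" "grng G g0 = g0" "g0 \<in> garr G"
    by (auto simp: units_def p0 Ginf_simps)
  then have h0': "h0 = (x0, 0, x0)" using h0 by (simp add: Hinf_simps)
  have g0u: "g0 \<in> units G" using \<open>grng G g0 = g0\<close> \<open>g0 \<in> garr G\<close> by (simp add: units_def)
  have "(h0, g0) \<in> U" using p p0 U by simp
  have "openin (prod_topology (gtop Hinf) (gtop G)) U" using U(1) by (simp add: Ginf_simps)
  then have all: "\<forall>x y. (x, y) \<in> U \<longrightarrow> (\<exists>U' V'. openin (gtop Hinf) U' \<and> openin (gtop G) V' \<and> x \<in> U' \<and> y \<in> V' \<and> U' \<times> V' \<subseteq> U)"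
    by (simp only: openin_prod_topology_alt)
  have ex: "\<exists>U' V'. openin (gtop Hinf) U' \<and> openin (gtop G) V' \<and> h0 \<in> U' \<and> g0 \<in> V' \<and> U' \<times> V' \<subseteq> U"
    using all[rule_format, OF \<open>(h0, g0) \<in> U\<close>] .
  from ex obtain A C where AC: "openin (gtop Hinf) A" "openin (gtop G) C" "h0 \<in> A" "g0 \<in> C" "A \<times> C \<subseteq> U"
    by (elim exE conjE)
  have cont0: "continuous_map PT (gtop Hinf) (\<lambda>x. (x, 0, x))"
    using psi_cont[of "[]" "[]"] by simp
  have "openin PT {x \<in> topspace PT. (x, 0, x) \<in> A}"
    using openin_continuous_map_preimage[OF cont0 AC(1)] .
  moreover have "x0 \<in> {x \<in> topspace PT. (x, 0, x) \<in> A}" using AC(3) h0' by simp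
  ultimately obtain \<mu> F where muF: "finite F" "x0 \<in> Zp \<mu> F" "Zp \<mu> F \<subseteq> {x \<in> topspace PT. (x, 0, x) \<in> A}"
    using PT_basis by blast
  have "openin (subtopology (gtop G) (units G)) (C \<inter> units G)"
    using AC(2) by (auto simp: openin_subtopology)
  then obtain V where V: "V \<in> \<B>" "g0 \<in> V" "V \<subseteq> C \<inter> units G" using assms(8) g0u AC(4) by blast
  then obtain l :: nat where l: "l \<ge> 1" "{x \<in> garr G. (\<alpha> ^^ l) x \<in> V} \<subseteq> V" using assms(9) by blast
  have Vcob: "compact_open_bisection G V" using assms(7) V(1) by blast
  have VG: "V \<subseteq> garr G" using V(3) by (auto simp: units_def)
  define \<beta> where "\<beta> = \<alpha> ^^ l"
  have bij\<beta>: "bij_betw \<beta> (garr G) (garr G)"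
    unfolding \<beta>_def by (rule bij_betw_funpow) (use assms(5) in \<open>simp add: automorphism_def\<close>)
  have hom\<beta>: "homeomorphic_map (gtop G) (gtop G) \<beta>"
    unfolding \<beta>_def by (rule homeo_funpow) (use assms(5) in \<open>simp add: automorphism_def\<close>)
  define V' where "V' = {x \<in> garr G. \<beta> x \<in> V}"
  have V'V: "V' \<subseteq> V" using l(2) unfolding V'_def \<beta>_def .
  have V'G: "V' \<subseteq> garr G" unfolding V'_def by blast
  have imV': "\<beta> ` V' = V"
  proof
    show "\<beta> ` V' \<subseteq> V" unfolding V'_def by blast
    show "V \<subseteq> \<beta> ` V'"
    proof
      fix v assume "v \<in> V"
      then have "v \<in> garr G" using VG by blast
      then obtain x where "x \<in> garr G" "\<beta> x = v" using bij\<beta> by (metis bij_betw_iff_bijections)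
      then show "v \<in> \<beta> ` V'" unfolding V'_def using \<open>v \<in> V\<close> by blast
    qed
  qed
  have V'open: "openin (gtop G) V'"
    using homeomorphic_map_openness[OF hom\<beta>, of V'] V'G topG imV' Vcob
    by (simp add: compact_open_bisection_def)
  have V'comp: "compactin (gtop G) V'"
    using homeomorphic_map_compactness[OF hom\<beta>, of V'] V'G topG imV' Vcob
    by (simp add: compact_open_bisection_def)
  have injb: "inj_on \<beta> (garr G)" using bij\<beta> by (simp add: bij_betw_def)
  have autp: "autpow G \<alpha> (int l) = \<beta>" by (simp add: autpow_def \<beta>_def)
  obtain e :: nat where e: "e \<notin> F" using muF(1) by (meson ex_new_if_finite infinite_UNIV_nat)
  define \<nu> where "\<nu> = replicate l e"
  have \<nu>ne: "\<nu> \<noteq> []" using l(1) unfolding \<nu>_def by simp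
  have hd\<nu>: "hd \<nu> = e" using l(1) unfolding \<nu>_def by (cases l) auto
  have len: "int (length (\<mu> @ \<nu>)) - int (length \<mu>) = int l" by (simp add: \<nu>_def)
  define H where "H = Zset (\<mu> @ \<nu>) \<mu> F"
  have Hmem: "h \<in> H \<longleftrightarrow> (\<exists>z. h = (pcat (\<mu> @ \<nu>) z, int l, pcat \<mu> z) \<and> avoids F z)" for h
    unfolding H_def Zset_def len by blast
  define B where "B = H \<times> V'"
  have Bmem: "q \<in> B \<longleftrightarrow> (\<exists>z g. q = ((pcat (\<mu> @ \<nu>) z, int l, pcat \<mu> z), g) \<and> avoids F z \<and> g \<in> V')" for q
  proof (cases q)
    case (Pair h g)
    then show ?thesis unfolding B_def using Hmem[of h] by auto
  qed
  have srcB: "gsrc ?L ((pcat (\<mu> @ \<nu>) z, int l, pcat \<mu> z), g) = ((pcat \<mu> z, 0::int, pcat \<mu> z), \<beta> g)"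
    if "g \<in> V'" for z g
  proof -
    have "g \<in> units G" using that V'V V(3) by blast
    then show ?thesis by (simp add: Ginf_simps Hinf_simps autp unitG)
  qed
  have rngB: "grng ?L ((pcat (\<mu> @ \<nu>) z, int l, pcat \<mu> z), g) = ((pcat (\<mu> @ \<nu>) z, 0::int, pcat (\<mu> @ \<nu>) z), g)"
    if "g \<in> V'" for z g
  proof -
    have "g \<in> units G" using that V'V V(3) by blast
    then show ?thesis by (simp add: Ginf_simps Hinf_simps unitG)
  qed
  show "\<exists>B. compact_open_bisection ?L B \<and> grng ?L ` B \<subset> gsrc ?L ` B \<and> gsrc ?L ` B \<subseteq> W"
  proof (intro exI conjI)
    show "compact_open_bisection ?L B"
      unfolding compact_open_bisection_def bisection_def
    proof (intro conjI)
      show "B \<subseteq> garr ?L" unfolding B_def Ginf_simps H_def using Zset_sub_garr V'G by blast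
      show "inj_on (grng ?L) B"
      proof (rule inj_onI)
        fix q1 q2 assume q: "q1 \<in> B" "q2 \<in> B" "grng ?L q1 = grng ?L q2"
        obtain z1 g1 where 1: "q1 = ((pcat (\<mu> @ \<nu>) z1, int l, pcat \<mu> z1), g1)" "g1 \<in> V'"
          using q(1) unfolding Bmem by blast
        obtain z2 g2 where 2: "q2 = ((pcat (\<mu> @ \<nu>) z2, int l, pcat \<mu> z2), g2)" "g2 \<in> V'"
          using q(2) unfolding Bmem by blast
        have "pcat (\<mu> @ \<nu>) z1 = pcat (\<mu> @ \<nu>) z2" "g1 = g2"
          using q(3) rngB[OF 1(2), of z1] rngB[OF 2(2), of z2] 1(1) 2(1) by auto
        then show "q1 = q2" using 1 2 pcat_inj by metis
      qed
      show "inj_on (gsrc ?L) B"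
      proof (rule inj_onI)
        fix q1 q2 assume q: "q1 \<in> B" "q2 \<in> B" "gsrc ?L q1 = gsrc ?L q2"
        obtain z1 g1 where 1: "q1 = ((pcat (\<mu> @ \<nu>) z1, int l, pcat \<mu> z1), g1)" "g1 \<in> V'"
          using q(1) unfolding Bmem by blast
        obtain z2 g2 where 2: "q2 = ((pcat (\<mu> @ \<nu>) z2, int l, pcat \<mu> z2), g2)" "g2 \<in> V'"
          using q(2) unfolding Bmem by blast
        have "pcat \<mu> z1 = pcat \<mu> z2" "\<beta> g1 = \<beta> g2"
          using q(3) srcB[OF 1(2), of z1] srcB[OF 2(2), of z2] 1(1) 2(1) by auto
        then have "z1 = z2" "g1 = g2" using pcat_inj injb 1(2) 2(2) V'G by (blast, metis inj_onD subsetD)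
        then show "q1 = q2" using 1 2 by simp
      qed
      show "openin (gtop ?L) B"
        unfolding Ginf_simps B_def H_def openin_prod_Times_iff using openin_Zset muF(1) V'open by blast
      show "compactin (gtop ?L) B"
        unfolding Ginf_simps B_def H_def compactin_Times using compact_Zset muF(1) V'comp by blast
    qed
    have srcim: "gsrc ?L ` B = {((pcat \<mu> z, 0::int, pcat \<mu> z), v) | z v. avoids F z \<and> v \<in> V}"
    proof
      show "gsrc ?L ` B \<subseteq> {((pcat \<mu> z, 0::int, pcat \<mu> z), v) | z v. avoids F z \<and> v \<in> V}"
      proof
        fix q assume "q \<in> gsrc ?L ` B"
        then obtain b where b: "b \<in> B" "q = gsrc ?L b" by blast
        then obtain z g where "q = gsrc ?L ((pcat (\<mu> @ \<nu>) z, int l, pcat \<mu> z), g)" "g \<in> V'" "avoids F z"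
          unfolding Bmem by blast
        then show "q \<in> {((pcat \<mu> z, 0::int, pcat \<mu> z), v) | z v. avoids F z \<and> v \<in> V}"
          using srcB imV' by blast
      qed
      show "{((pcat \<mu> z, 0::int, pcat \<mu> z), v) | z v. avoids F z \<and> v \<in> V} \<subseteq> gsrc ?L ` B"
      proof
        fix q assume "q \<in> {((pcat \<mu> z, 0::int, pcat \<mu> z), v) | z v. avoids F z \<and> v \<in> V}"
        then obtain z v where q: "q = ((pcat \<mu> z, 0::int, pcat \<mu> z), v)" "avoids F z" "v \<in> V" by blast
        then obtain g where g: "g \<in> V'" "\<beta> g = v" using imV' by blast
        have "((pcat (\<mu> @ \<nu>) z, int l, pcat \<mu> z), g) \<in> B" unfolding Bmem using q(2) g(1) by blast
        moreover have "gsrc ?L ((pcat (\<mu> @ \<nu>) z, int l, pcat \<mu> z), g) = q" using srcB[OF g(1)] g(2) q(1) by simp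
        ultimately show "q \<in> gsrc ?L ` B" by force
      qed
    qed
    have rngim: "grng ?L ` B = {((pcat (\<mu> @ \<nu>) z, 0::int, pcat (\<mu> @ \<nu>) z), g) | z g. avoids F z \<and> g \<in> V'}"
    proof
      show "grng ?L ` B \<subseteq> {((pcat (\<mu> @ \<nu>) z, 0::int, pcat (\<mu> @ \<nu>) z), g) | z g. avoids F z \<and> g \<in> V'}"
      proof
        fix q assume "q \<in> grng ?L ` B"
        then obtain b where b: "b \<in> B" "q = grng ?L b" by blast
        then obtain z g where "q = grng ?L ((pcat (\<mu> @ \<nu>) z, int l, pcat \<mu> z), g)" "g \<in> V'" "avoids F z"
          unfolding Bmem by blast
        then show "q \<in> {((pcat (\<mu> @ \<nu>) z, 0::int, pcat (\<mu> @ \<nu>) z), g) | z g. avoids F z \<and> g \<in> V'}"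
          using rngB by blast
      qed
      show "{((pcat (\<mu> @ \<nu>) z, 0::int, pcat (\<mu> @ \<nu>) z), g) | z g. avoids F z \<and> g \<in> V'} \<subseteq> grng ?L ` B"
      proof
        fix q assume "q \<in> {((pcat (\<mu> @ \<nu>) z, 0::int, pcat (\<mu> @ \<nu>) z), g) | z g. avoids F z \<and> g \<in> V'}"
        then obtain z g where q: "q = ((pcat (\<mu> @ \<nu>) z, 0::int, pcat (\<mu> @ \<nu>) z), g)" "avoids F z" "g \<in> V'" by blast
        have "((pcat (\<mu> @ \<nu>) z, int l, pcat \<mu> z), g) \<in> B" unfolding Bmem using q(2,3) by blast
        moreover have "grng ?L ((pcat (\<mu> @ \<nu>) z, int l, pcat \<mu> z), g) = q" using rngB[OF q(3)] q(1) by simp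
        ultimately show "q \<in> grng ?L ` B" by force
      qed
    qed
    have avn: "avoids F (pcat \<nu> z)" for z using avoids_pcat[OF \<nu>ne] hd\<nu> e by simp
    show "grng ?L ` B \<subset> gsrc ?L ` B"
    proof
      show "grng ?L ` B \<subseteq> gsrc ?L ` B"
      proof
        fix q assume "q \<in> grng ?L ` B"
        then obtain z g where q: "q = ((pcat (\<mu> @ \<nu>) z, 0::int, pcat (\<mu> @ \<nu>) z), g)" "avoids F z" "g \<in> V'"
          unfolding rngim by blast
        have "q = ((pcat \<mu> (pcat \<nu> z), 0::int, pcat \<mu> (pcat \<nu> z)), g)" using q(1) by (simp add: pcat_append)
        then show "q \<in> gsrc ?L ` B" unfolding srcim using avn q(3) V'V by blast
      qed
      have "((pcat \<mu> (Inl []), 0::int, pcat \<mu> (Inl [])), g0) \<in> gsrc ?L ` B"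
      proof -
        have "avoids F (Inl [])" by (simp add: avoids_def)
        then show ?thesis unfolding srcim using V(2) by blast
      qed
      moreover have "((pcat \<mu> (Inl []), 0::int, pcat \<mu> (Inl [])), g0) \<notin> grng ?L ` B"
      proof
        assume "((pcat \<mu> (Inl []), 0::int, pcat \<mu> (Inl [])), g0) \<in> grng ?L ` B"
        then obtain z where "pcat \<mu> (Inl []) = pcat (\<mu> @ \<nu>) z" unfolding rngim by blast
        then have "pcat \<mu> (Inl []) = pcat \<mu> (pcat \<nu> z)" by (simp add: pcat_append)
        then have "pcat \<nu> z = Inl []" using pcat_inj by metis
        then show False using pcat_ne[OF \<nu>ne] by blast
      qed
      ultimately show "grng ?L ` B \<noteq> gsrc ?L ` B" by blast
    qed
    show "gsrc ?L ` B \<subseteq> W"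
    proof
      fix q assume "q \<in> gsrc ?L ` B"
      then obtain z v where q: "q = ((pcat \<mu> z, 0::int, pcat \<mu> z), v)" "avoids F z" "v \<in> V"
        unfolding srcim by blast
      have "pcat \<mu> z \<in> Zp \<mu> F" unfolding Zp_def using q(2) by blast
      then have "(pcat \<mu> z, 0::int, pcat \<mu> z) \<in> A" using muF(3) by blast
      moreover have "v \<in> C" using q(3) V(3) by blast
      ultimately have "q \<in> U" using AC(5) q(1) by blast
      moreover have "q \<in> units ?L"
      proof -
        have vu: "v \<in> units G" using q(3) V(3) by blast
        have "(pcat \<mu> z, 0::int, pcat \<mu> z) \<in> garr Hinf"
          using Zset_sub_garr[of \<mu> \<mu> "{}"] unfolding Zset_def by force
        moreover have "v \<in> garr G" using vu by (simp add: units_def)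
        ultimately show ?thesis using q(1) vu unitG[OF vu]
          by (simp add: units_def Ginf_simps Hinf_simps)
      qed
      ultimately show "q \<in> W" using U(2) by blast
    qed
  qed
qed


end
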